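(* For all integers $n\ge 3$ and $1<k<n$, the edge connectivity of $G=H_B(n,k)$ is $\lambda(G)=1$.
   Context: Fix integers $n\ge 2$ and $1\le k<n$ and positive real numbers $x_1<x_2<\dots<x_n$. Let $\mathscr{B}_n=\{\pm x_1,\pm x_2,\dots,\pm x_{n-1},x_n\}$ (so $-x_n\notin\mathscr{B}_n$). Let $\phi(\mathscr{B}_n)$ be the family of all nonempty subsets $S\subseteq\mathscr{B}_n$ whose elements have pairwise distinct absolute values and whose element of largest absolute value is positive. Let $\mathscr{B}_n^+=\{x_1,\dots,x_n\}$, let $V_1$ be the set of all $k$-element subsets of $\mathscr{B}_n^+$, and let $V_2=\phi(\mathscr{B}_n)\setminus V_1$. For $A\in\phi(\mathscr{B}_n)$ put $A^\dagger=\{|a|:a\in A\}$. The bipartite Kneser B type-$k$ graph $H_B(n,k)$ is the simple graph with vertex set $V_1\cup V_2$ in which $X\in V_1$ and $Y\in V_2$ are adjacent if and only if $X\subseteq Y^\dagger$ or $Y^\dagger\subseteq X$, and there are no other edges. *)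

theory Defs
  imports Complex_Main
begin

definition adj_rel :: "'a set set \<Rightarrow> ('a \<times> 'a) set" where
  "adj_rel E = {(u, v). {u, v} \<in> E \<and> u \<noteq> v}"

definition graph_connected :: "'a set \<Rightarrow> 'a set set \<Rightarrow> bool" where
  "graph_connected V E \<longleftrightarrow> (\<forall>u\<in>V. \<forall>v\<in>V. (u, v) \<in> (adj_rel E)\<^sup>*)"

definition edge_connectivity :: "'a set \<Rightarrow> 'a set set \<Rightarrow> nat" where
  "edge_connectivity V E =
     (LEAST m. \<exists>F. F \<subseteq> E \<and> card F = m \<and> \<not> graph_connected V (E - F))"

text \<open>The points are x 1 < x 2 < ... < x n (positive reals), indexed from 1.\<close>

definition Bset :: "(nat \<Rightarrow> real) \<Rightarrow> nat \<Rightarrow> real set" where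
  "Bset x n = {x i | i. 1 \<le> i \<and> i \<le> n} \<union> {- x i | i. 1 \<le> i \<and> i \<le> n - 1}"

definition Bplus :: "(nat \<Rightarrow> real) \<Rightarrow> nat \<Rightarrow> real set" where
  "Bplus x n = {x i | i. 1 \<le> i \<and> i \<le> n}"

definition dagger :: "real set \<Rightarrow> real set" where
  "dagger A = abs ` A"

definition phiB :: "(nat \<Rightarrow> real) \<Rightarrow> nat \<Rightarrow> real set set" where
  "phiB x n = {S. S \<subseteq> Bset x n \<and> S \<noteq> {} \<and> inj_on abs S \<and>
                  (\<exists>m\<in>S. 0 < m \<and> (\<forall>a\<in>S. \<bar>a\<bar> \<le> \<bar>m\<bar>))}"

definition HB_V1 :: "(nat \<Rightarrow> real) \<Rightarrow> nat \<Rightarrow> nat \<Rightarrow> real set set" where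
  "HB_V1 x n k = {S. S \<subseteq> Bplus x n \<and> card S = k}"

definition HB_V2 :: "(nat \<Rightarrow> real) \<Rightarrow> nat \<Rightarrow> nat \<Rightarrow> real set set" where
  "HB_V2 x n k = phiB x n - HB_V1 x n k"

definition HB_vertices :: "(nat \<Rightarrow> real) \<Rightarrow> nat \<Rightarrow> nat \<Rightarrow> real set set" where
  "HB_vertices x n k = HB_V1 x n k \<union> HB_V2 x n k"

definition HB_edges :: "(nat \<Rightarrow> real) \<Rightarrow> nat \<Rightarrow> nat \<Rightarrow> real set set set" where
  "HB_edges x n k = {{X, Y} | X Y. X \<in> HB_V1 x n k \<and> Y \<in> HB_V2 x n k \<and>
                        (X \<subseteq> dagger Y \<or> dagger Y \<subseteq> X)}"

end

theory Submission
  imports Defs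
begin

locale HBloc =
  fixes x :: "nat \<Rightarrow> real" and n k :: nat
  assumes n3: "3 \<le> n" and k1: "1 < k" and kn: "k < n"
    and x1: "0 < x 1"
    and mono: "\<And>i j. 1 \<le> i \<Longrightarrow> i < j \<Longrightarrow> j \<le> n \<Longrightarrow> x i < x j"
begin

lemma xpos: "1 \<le> i \<Longrightarrow> i \<le> n \<Longrightarrow> 0 < x i"
  using x1 mono[of 1 i] by (cases "i = 1") auto

lemma xinj: "inj_on x {1..n}"
proof (rule inj_onI)
  fix i j assume "i \<in> {1..n}" "j \<in> {1..n}" "x i = x j"
  then show "i = j" using mono[of i j] mono[of j i]
    by (metis atLeastAtMost_iff less_irrefl linorder_neqE_nat)
qed

definition P where "P = x ` {1..n}"

lemma Bplus_eq: "Bplus x n = P"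
  unfolding Bplus_def P_def by auto

lemma Bset_eq: "Bset x n = P \<union> uminus ` x ` {1..n-1}"
  unfolding Bset_def P_def by auto

lemma finP: "finite P" unfolding P_def by simp

lemma cardP: "card P = n"
  unfolding P_def using xinj by (simp add: card_image)

lemma Ppos: "a \<in> P \<Longrightarrow> 0 < a"
  unfolding P_def using xpos by auto

lemma finB: "finite (Bset x n)" unfolding Bset_eq using finP by simp

lemma dagger_sub: "Y \<in> phiB x n \<Longrightarrow> dagger Y \<subseteq> P"
proof
  fix b assume Y: "Y \<in> phiB x n" and "b \<in> dagger Y"
  then obtain a where a: "a \<in> Y" "b = \<bar>a\<bar>" unfolding dagger_def by blast
  have "a \<in> P \<union> uminus ` x ` {1..n-1}" using Y a(1) unfolding phiB_def Bset_eq by blast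
  then show "b \<in> P"
  proof
    assume "a \<in> P" then show ?thesis using a Ppos[of a] by simp
  next
    assume "a \<in> uminus ` x ` {1..n-1}"
    then obtain i where i: "i \<in> {1..n-1}" "a = - x i" by blast
    then have "0 < x i" "x i \<in> P" using xpos[of i] unfolding P_def by auto
    then show ?thesis using a i by simp
  qed
qed

lemma card_dagger: "Y \<in> phiB x n \<Longrightarrow> card (dagger Y) = card Y"
  unfolding phiB_def dagger_def by (simp add: card_image)

lemma dagger_pos: "A \<subseteq> P \<Longrightarrow> dagger A = A"
proof -
  assume "A \<subseteq> P"
  then have "\<And>a. a \<in> A \<Longrightarrow> \<bar>a\<bar> = a" using Ppos by force
  then show ?thesis unfolding dagger_def by (simp add: image_cong)
qed

lemma V_sub: "HB_vertices x n k \<subseteq> Pow (Bset x n)"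
proof
  fix S assume "S \<in> HB_vertices x n k"
  then have "S \<in> HB_V1 x n k \<or> S \<in> phiB x n" unfolding HB_vertices_def HB_V2_def by blast
  then show "S \<in> Pow (Bset x n)"
  proof
    assume "S \<in> HB_V1 x n k"
    then have "S \<subseteq> P" unfolding HB_V1_def Bplus_eq by blast
    then show ?thesis unfolding Bset_eq by blast
  qed (simp add: phiB_def)
qed

lemma finV: "finite (HB_vertices x n k)"
  using V_sub finB by (meson finite_Pow_iff rev_finite_subset)

lemma finE: "finite (HB_edges x n k)"
proof -
  have "HB_edges x n k \<subseteq> Pow (HB_vertices x n k)"
    unfolding HB_edges_def HB_vertices_def by blast
  then show ?thesis using finV by (meson finite_Pow_iff rev_finite_subset)
qed

lemma edge_adj: "{X, Y} \<in> HB_edges x n k \<Longrightarrow> (X, Y) \<in> adj_rel (HB_edges x n k)"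
proof -
  assume e: "{X, Y} \<in> HB_edges x n k"
  then obtain A B where AB: "{X,Y} = {A,B}" "A \<in> HB_V1 x n k" "B \<in> HB_V2 x n k"
    unfolding HB_edges_def by blast
  then have "A \<noteq> B" unfolding HB_V2_def by auto
  then have "X \<noteq> Y" using AB(1) by (metis doubleton_eq_iff)
  then show ?thesis using e unfolding adj_rel_def by auto
qed

lemma P_phi: "P \<in> phiB x n"
proof -
  have "x n \<in> P" unfolding P_def using n3 by auto
  moreover have "\<forall>a\<in>P. \<bar>a\<bar> \<le> \<bar>x n\<bar>"
  proof
    fix a assume "a \<in> P"
    then obtain i where "i \<in> {1..n}" "a = x i" unfolding P_def by auto
    then show "\<bar>a\<bar> \<le> \<bar>x n\<bar>" using mono[of i n] xpos[of i] xpos[of n] n3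
      by (cases "i = n") auto
  qed
  moreover have "inj_on abs P"
  proof (rule inj_onI)
    fix a b assume "a \<in> P" "b \<in> P" "\<bar>a\<bar> = \<bar>b\<bar>"
    then show "a = b" using Ppos[of a] Ppos[of b] by simp
  qed
  moreover have "P \<noteq> {}" using \<open>x n \<in> P\<close> by blast
  moreover have "P \<subseteq> Bset x n" unfolding Bset_eq by blast
  moreover have "0 < x n" using xpos n3 by simp
  ultimately show ?thesis unfolding phiB_def by blast
qed

lemma P_V2: "P \<in> HB_V2 x n k"
  using P_phi cardP kn unfolding HB_V2_def HB_V1_def by auto

lemma V1_P: "X \<in> HB_V1 x n k \<Longrightarrow> {X, P} \<in> HB_edges x n k"
  unfolding HB_edges_def using P_V2 dagger_pos[of P]
  by (auto simp: HB_V1_def Bplus_eq)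

lemma V2_nb: "Y \<in> HB_V2 x n k \<Longrightarrow> \<exists>X. {X, Y} \<in> HB_edges x n k \<and> X \<in> HB_V1 x n k"
proof -
  assume Y: "Y \<in> HB_V2 x n k"
  then have Yp: "Y \<in> phiB x n" unfolding HB_V2_def by auto
  have D: "dagger Y \<subseteq> P" using dagger_sub[OF Yp] .
  have fD: "finite (dagger Y)" using D finP finite_subset by blast
  obtain X where X: "X \<subseteq> P" "card X = k" "X \<subseteq> dagger Y \<or> dagger Y \<subseteq> X"
  proof (cases "k \<le> card (dagger Y)")
    case True
    then obtain X where "X \<subseteq> dagger Y" "card X = k"
      using obtain_subset_with_card_n by metis
    then show ?thesis using that D by blast
  next
    case False
    have "card (P - dagger Y) = n - card (dagger Y)" using D finP cardP
      by (simp add: card_Diff_subset fD)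
    then have "k - card (dagger Y) \<le> card (P - dagger Y)" using kn by simp
    then obtain Z where Z: "Z \<subseteq> P - dagger Y" "card Z = k - card (dagger Y)"
      using obtain_subset_with_card_n by metis
    have fZ: "finite Z" using Z finP finite_subset by blast
    have "card (dagger Y \<union> Z) = k" using Z False fZ fD
      by (subst card_Un_disjoint) auto
    then show ?thesis using that[of "dagger Y \<union> Z"] Z D by blast
  qed
  then have "X \<in> HB_V1 x n k" unfolding HB_V1_def Bplus_eq by auto
  then show ?thesis using Y X unfolding HB_edges_def by blast
qed

lemma reach_P: "v \<in> HB_vertices x n k \<Longrightarrow> (v, P) \<in> (adj_rel (HB_edges x n k))\<^sup>* \<and> (P, v) \<in> (adj_rel (HB_edges x n k))\<^sup>*"
proof -
  let ?R = "adj_rel (HB_edges x n k)"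
  have sym: "\<And>a b. {a,b} \<in> HB_edges x n k \<Longrightarrow> (a,b) \<in> ?R \<and> (b,a) \<in> ?R"
    using edge_adj by (metis insert_commute)
  assume "v \<in> HB_vertices x n k"
  then consider "v \<in> HB_V1 x n k" | "v \<in> HB_V2 x n k" unfolding HB_vertices_def by auto
  then show ?thesis
  proof cases
    case 1
    then show ?thesis using sym[OF V1_P[OF 1]] by auto
  next
    case 2
    then obtain X where X: "{X, v} \<in> HB_edges x n k" "X \<in> HB_V1 x n k" using V2_nb by blast
    have a: "(v, X) \<in> ?R" "(X, v) \<in> ?R" using sym[OF X(1)] by auto
    have b: "(X, P) \<in> ?R" "(P, X) \<in> ?R" using sym[OF V1_P[OF X(2)]] by auto
    show ?thesis using a b
      by (meson converse_rtrancl_into_rtrancl r_into_rtrancl)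
  qed
qed

lemma connected: "graph_connected (HB_vertices x n k) (HB_edges x n k)"
  unfolding graph_connected_def using reach_P by (meson rtrancl_trans)

definition X0 where "X0 = x ` {1..k}"
definition Y1 where "Y1 = insert (- x 1) (x ` {2..k})"

lemma X0_V1: "X0 \<in> HB_V1 x n k"
proof -
  have "inj_on x {1..k}" by (rule inj_on_subset[OF xinj]) (use kn in auto)
  then show ?thesis unfolding HB_V1_def Bplus_eq X0_def P_def using kn k1
    by (auto simp: card_image)
qed

lemma dagger_Y1: "dagger Y1 = X0"
proof -
  have "dagger Y1 = insert \<bar>- x 1\<bar> (abs ` x ` {2..k})" unfolding dagger_def Y1_def by simp
  also have "abs ` x ` {2..k} = x ` {2..k}"
    unfolding image_image
  proof (rule image_cong)
    fix i assume "i \<in> {2..k}"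
    then show "\<bar>x i\<bar> = x i" using xpos[of i] kn by simp
  qed simp
  also have "\<bar>- x 1\<bar> = x 1" using x1 by simp
  also have "insert (x 1) (x ` {2..k}) = X0" unfolding X0_def using k1
    by (metis Icc_eq_insert_lb_nat image_insert less_imp_le_nat one_add_one plus_1_eq_Suc)
  finally show ?thesis .
qed

lemma Y1_notP: "\<not> Y1 \<subseteq> P"
  unfolding Y1_def using Ppos x1 by force

lemma Y1_phi: "Y1 \<in> phiB x n"
proof -
  have sub: "Y1 \<subseteq> Bset x n" unfolding Y1_def Bset_eq P_def using kn n3 by auto
  have inj: "inj_on abs Y1"
  proof (rule inj_onI)
    fix a b assume a: "a \<in> Y1" and b: "b \<in> Y1" and ab: "\<bar>a\<bar> = \<bar>b\<bar>"
    have ne: "\<And>i. i \<in> {2..k} \<Longrightarrow> x 1 < x i" using mono[of 1] kn by auto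
    have pp: "\<And>i. i \<in> {2..k} \<Longrightarrow> 0 < x i" using xpos kn by auto
    have cs: "\<And>c. c \<in> Y1 \<Longrightarrow> c = - x 1 \<or> (\<exists>i\<in>{2..k}. c = x i)" unfolding Y1_def by auto
    show "a = b"
    proof (cases "a = - x 1")
      case True
      show ?thesis
      proof (cases "b = - x 1")
        case False
        then obtain j where j: "j \<in> {2..k}" "b = x j" using cs[OF b] by blast
        have "\<bar>a\<bar> = x 1" using True x1 by simp
        moreover have "\<bar>b\<bar> = x j" using j pp[OF j(1)] by simp
        ultimately show ?thesis using ab ne[OF j(1)] by simp
      qed (use True in simp)
    next
      case aF: False
      then obtain i where i: "i \<in> {2..k}" "a = x i" using cs[OF a] by blast
      have ai: "\<bar>a\<bar> = x i" using i pp[OF i(1)] by simp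
      show ?thesis
      proof (cases "b = - x 1")
        case True
        have "\<bar>b\<bar> = x 1" using True x1 by simp
        then show ?thesis using ab ai ne[OF i(1)] by simp
      next
        case False
        then obtain j where j: "j \<in> {2..k}" "b = x j" using cs[OF b] by blast
        have "\<bar>b\<bar> = x j" using j pp[OF j(1)] by simp
        then show ?thesis using ab ai i j by simp
      qed
    qed
  qed
  have "x k \<in> Y1" unfolding Y1_def using k1 by auto
  moreover have "0 < x k" using xpos kn k1 by auto
  moreover have "\<forall>a\<in>Y1. \<bar>a\<bar> \<le> \<bar>x k\<bar>"
  proof
    fix a assume "a \<in> Y1"
    then have "\<bar>a\<bar> \<in> X0" using dagger_Y1 unfolding dagger_def by auto
    then obtain i where "i \<in> {1..k}" "\<bar>a\<bar> = x i" unfolding X0_def by auto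
    then show "\<bar>a\<bar> \<le> \<bar>x k\<bar>" using mono[of i k] xpos[of k] kn by (cases "i = k") auto
  qed
  ultimately show ?thesis unfolding phiB_def using sub inj by blast
qed

lemma Y1_V2: "Y1 \<in> HB_V2 x n k"
  using Y1_phi Y1_notP unfolding HB_V2_def HB_V1_def Bplus_eq by auto

lemma edge_Y1: "{X0, Y1} \<in> HB_edges x n k"
  unfolding HB_edges_def using X0_V1 Y1_V2 dagger_Y1 by blast

lemma only_edge: "e \<in> HB_edges x n k \<Longrightarrow> Y1 \<in> e \<Longrightarrow> e = {X0, Y1}"
proof -
  assume "e \<in> HB_edges x n k" "Y1 \<in> e"
  then obtain X Y where e: "e = {X,Y}" "X \<in> HB_V1 x n k" "Y \<in> HB_V2 x n k"
    "X \<subseteq> dagger Y \<or> dagger Y \<subseteq> X" and "Y1 = X \<or> Y1 = Y"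
    unfolding HB_edges_def by blast
  moreover have "Y1 \<noteq> X" using e(2) Y1_notP unfolding HB_V1_def Bplus_eq by auto
  ultimately have Y: "Y = Y1" by auto
  have fX0: "finite X0" unfolding X0_def by simp
  have cX0: "card X0 = k" using X0_V1 unfolding HB_V1_def by auto
  have cX: "card X = k" "X \<subseteq> P" using e(2) unfolding HB_V1_def Bplus_eq by auto
  have fX: "finite X" using cX finP finite_subset by blast
  have "X = X0" using e(4) unfolding Y dagger_Y1
    using card_subset_eq[OF fX0, of X] card_subset_eq[OF fX, of X0] cX cX0 by auto
  then show ?thesis using e Y by auto
qed

lemma not_conn: "\<not> graph_connected (HB_vertices x n k) (HB_edges x n k - {{X0, Y1}})"
proof
  let ?R = "adj_rel (HB_edges x n k - {{X0, Y1}})"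
  assume "graph_connected (HB_vertices x n k) (HB_edges x n k - {{X0, Y1}})"
  moreover have "Y1 \<in> HB_vertices x n k" "P \<in> HB_vertices x n k"
    using Y1_V2 P_V2 unfolding HB_vertices_def by auto
  ultimately have "(Y1, P) \<in> ?R\<^sup>*" unfolding graph_connected_def by blast
  moreover have "P \<noteq> Y1" using Y1_notP by auto
  ultimately obtain w where "(Y1, w) \<in> ?R"
    by (metis converse_rtranclE)
  then have e: "{Y1, w} \<in> HB_edges x n k - {{X0, Y1}}" unfolding adj_rel_def by simp
  then have "{Y1, w} = {X0, Y1}" using only_edge[of "{Y1, w}"] by blast
  then show False using e by simp
qed

lemma result: "edge_connectivity (HB_vertices x n k) (HB_edges x n k) = 1"
  unfolding edge_connectivity_def
proof (rule Least_equality)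
  show "\<exists>F. F \<subseteq> HB_edges x n k \<and> card F = 1 \<and> \<not> graph_connected (HB_vertices x n k) (HB_edges x n k - F)"
  proof (intro exI conjI)
    show "{{X0, Y1}} \<subseteq> HB_edges x n k" using edge_Y1 by simp
  qed (use not_conn in simp_all)
next
  fix m assume "\<exists>F. F \<subseteq> HB_edges x n k \<and> card F = m \<and> \<not> graph_connected (HB_vertices x n k) (HB_edges x n k - F)"
  then obtain F where F: "F \<subseteq> HB_edges x n k" "card F = m" "\<not> graph_connected (HB_vertices x n k) (HB_edges x n k - F)"
    by blast
  show "1 \<le> m"
  proof (rule ccontr)
    assume "\<not> 1 \<le> m"
    have "finite F" using F(1) finE finite_subset by blast
    moreover have "m = 0" using \<open>\<not> 1 \<le> m\<close> by simp
    ultimately have "F = {}" using F(2) by simp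
    then show False using F connected by simp
  qed
qed

end

theorem mainTheorem7:
  fixes x :: "nat \<Rightarrow> real" and n k :: nat
  assumes "3 \<le> n" and "1 < k" and "k < n"
    and "0 < x 1"
    and "\<And>i j. 1 \<le> i \<Longrightarrow> i < j \<Longrightarrow> j \<le> n \<Longrightarrow> x i < x j"
  shows "edge_connectivity (HB_vertices x n k) (HB_edges x n k) = 1"
proof -
  interpret HBloc x n k using assms by unfold_locales auto
  show ?thesis by (rule result)
qed

end
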